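(* Let $n\geq2$, $m\geq1$ be integers, $\alpha,\beta\in\mathbb{C}$, $1\leq k\leq n/2$, and assume $|\beta-\alpha|>\cos\phi_k$. Then $$\big(\widetilde D_k\cap B_{\cos\phi_k}(0)\big)\cup\big(\widetilde E_k\cap R_{|\beta-\alpha|,k}\cap X\big)=B_{\cos\phi_k}(0)\cup\big(\widetilde E_k\cap R_{|\beta-\alpha|,k}\cap X\big),$$ where $X=\mathbb{C}$ if $k\leq m$ and $X=B_{\cos\psi_{k,m}}(0)$ if $k>m$. Moreover, each of the two lines $\{x+iy:\ x\cos\delta_k+y\sin\delta_k=|\beta-\alpha|\cos\delta_k\}$ and $\{x+iy:\ x\cos\delta_k-y\sin\delta_k=|\beta-\alpha|\cos\delta_k\}$ is tangent to the circle $x^2+y^2=\cos^2\phi_k$.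
   Context: $\phi_k=\frac{k\pi}{n+1}$, $\psi_{k,m}=\frac{(k-m)\pi}{n+1}$. $D_k=\{\theta\in\mathbb{R}:\ |\beta-\alpha|\cos\theta\leq\cos\phi_k\}$. $\delta_k=\arccos(\cos\phi_k/|\beta-\alpha|)\in[0,\pi]$ if $\beta\neq\alpha$ and $|\beta-\alpha|\geq|\cos\phi_k|$, and $\delta_k=0$ otherwise. $\widetilde D_k=\{\mu\in\mathbb{C}:\ \arg\mu\in D_k\}$ and $\widetilde E_k=\{\mu\in\mathbb{C}:\ \arg\mu\notin D_k\}$. $B_r(\lambda)$ is the closed disk of radius $r$ centered at $\lambda$. For $r\geq0$, $R_{r,k}=\{x+iy:\ x\leq r,\ (x-r)\cot\delta_k\leq y\leq(r-x)\cot\delta_k\}$. *)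

theory Defs
  imports "HOL-Analysis.Analysis"
begin

definition phi :: "nat \<Rightarrow> nat \<Rightarrow> real" where
  "phi n k = real k * pi / (real n + 1)"

definition psi :: "nat \<Rightarrow> nat \<Rightarrow> nat \<Rightarrow> real" where
  "psi n k m = (real k - real m) * pi / (real n + 1)"

(* delta_k, with d = |beta - alpha| *)
definition delta :: "nat \<Rightarrow> nat \<Rightarrow> real \<Rightarrow> real" where
  "delta n k d = (if d \<noteq> 0 \<and> d \<ge> \<bar>cos (phi n k)\<bar> then arccos (cos (phi n k) / d) else 0)"

definition Dset :: "nat \<Rightarrow> nat \<Rightarrow> real \<Rightarrow> real set" where
  "Dset n k d = {\<theta>. d * cos \<theta> \<le> cos (phi n k)}"

definition Dtilde :: "nat \<Rightarrow> nat \<Rightarrow> real \<Rightarrow> complex set" where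
  "Dtilde n k d = {\<mu>. Arg \<mu> \<in> Dset n k d}"

definition Etilde :: "nat \<Rightarrow> nat \<Rightarrow> real \<Rightarrow> complex set" where
  "Etilde n k d = {\<mu>. Arg \<mu> \<notin> Dset n k d}"

definition Rset :: "nat \<Rightarrow> nat \<Rightarrow> real \<Rightarrow> real \<Rightarrow> complex set" where
  "Rset n k d r = {z. Re z \<le> r \<and> (Re z - r) * cot (delta n k d) \<le> Im z
                      \<and> Im z \<le> (r - Re z) * cot (delta n k d)}"

definition tangent_to_circle :: "complex set \<Rightarrow> real \<Rightarrow> bool" where
  "tangent_to_circle L r \<longleftrightarrow> (\<exists>!z. z \<in> L \<and> (Re z)^2 + (Im z)^2 = r^2)"

end

theory Submission
  imports Defs
begin

lemma cs_aux:
  fixes x y a b c :: real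
  assumes "a^2 + b^2 = 1" "x^2 + y^2 \<le> c^2" "c > 0"
  shows "x * a + y * b \<le> c"
proof -
  have "(x*a + y*b)^2 \<le> (x^2+y^2)*(a^2+b^2)"
  proof -
    have "(x^2+y^2)*(a^2+b^2) = (x*a+y*b)^2 + (x*b-y*a)^2" by (simp add: power2_eq_square algebra_simps)
    moreover have "(x*b-y*a)^2 \<ge> 0" by simp
    ultimately show ?thesis by linarith
  qed
  also have "\<dots> = x^2+y^2" using assms(1) by simp
  also have "\<dots> \<le> c^2" using assms(2) by simp
  finally have "(x*a + y*b)^2 \<le> c^2" .
  then show ?thesis using power2_le_imp_le[of "x*a+y*b" c] assms(3) by linarith
qed

lemma tangent_aux:
  fixes a b c :: real
  assumes "a^2 + b^2 = 1" "c > 0"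
  shows "tangent_to_circle {z. Re z * a + Im z * b = c} c"
  unfolding tangent_to_circle_def
proof (rule ex1I[of _ "Complex (c*a) (c*b)"])
  show "Complex (c*a) (c*b) \<in> {z. Re z * a + Im z * b = c} \<and> (Re (Complex (c*a) (c*b)))^2 + (Im (Complex (c*a) (c*b)))^2 = c^2"
  proof -
    have "(c*a)^2 + (c*b)^2 = c^2 * (a^2+b^2)" by (simp add: power_mult_distrib algebra_simps)
    then have e: "(c*a)^2 + (c*b)^2 = c^2" using assms by simp
    have "c*a*a + c*b*b = c * (a^2+b^2)" by (simp add: power2_eq_square algebra_simps)
    then have "c*a*a + c*b*b = c" using assms by simp
    then show ?thesis using e by simp
  qed
next
  fix z assume h: "z \<in> {z. Re z * a + Im z * b = c} \<and> (Re z)^2 + (Im z)^2 = c^2"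
  have "(Re z - c*a)^2 + (Im z - c*b)^2 = (Re z^2 + Im z^2) - 2*c*(Re z * a + Im z * b) + c^2*(a^2+b^2)"
    by (simp add: power2_eq_square algebra_simps)
  also have "\<dots> = c^2 - 2*c*c + c^2*1" using h assms(1) by simp
  also have "\<dots> = 0" by (simp add: power2_eq_square)
  finally have "(Re z - c*a)^2 + (Im z - c*b)^2 = 0" .
  then have "Re z = c*a" "Im z = c*b" by (simp_all add: sum_power2_eq_zero_iff)
  then show "z = Complex (c*a) (c*b)" by (simp add: complex_eq_iff)
qed

theorem proposition3p4:
  fixes n m k :: nat and \<alpha> \<beta> :: complex
  assumes "n \<ge> 2" and "m \<ge> 1" and "1 \<le> k" and "2 * k \<le> n"
    and "cmod (\<beta> - \<alpha>) > cos (phi n k)"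
  shows "(let d = cmod (\<beta> - \<alpha>);
              X = (if k \<le> m then UNIV else cball 0 (cos (psi n k m)))
          in (Dtilde n k d \<inter> cball 0 (cos (phi n k))) \<union> (Etilde n k d \<inter> Rset n k d d \<inter> X)
             = cball 0 (cos (phi n k)) \<union> (Etilde n k d \<inter> Rset n k d d \<inter> X)
           \<and> tangent_to_circle
               {z. Re z * cos (delta n k d) + Im z * sin (delta n k d) = d * cos (delta n k d)}
               (cos (phi n k))
           \<and> tangent_to_circle
               {z. Re z * cos (delta n k d) - Im z * sin (delta n k d) = d * cos (delta n k d)}
               (cos (phi n k)))"
proof -
  define d where "d = cmod (\<beta> - \<alpha>)"
  define c where "c = cos (phi n k)"
  define X where "X = (if k \<le> m then UNIV else cball (0::complex) (cos (psi n k m)))"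
  have phpos: "0 < phi n k" using assms unfolding phi_def by (simp add: divide_pos_pos)
  have phlt: "phi n k < pi/2"
  proof -
    have "real k * 2 < real n + 1" using assms by linarith
    then have "(real k * 2) * pi < (real n + 1) * pi" by (intro mult_strict_right_mono) auto
    then show ?thesis unfolding phi_def by (simp add: field_simps)
  qed
  have cpos: "c > 0" unfolding c_def using phpos phlt by (intro cos_gt_zero_pi) auto
  have dc: "d > c" using assms(5) unfolding d_def c_def .
  have del: "delta n k d = arccos (c/d)" unfolding delta_def c_def[symmetric] using dc cpos by auto
  have q: "0 < c/d" "c/d < 1" using dc cpos by (auto simp: field_simps)
  define ca where "ca = cos (delta n k d)"
  define sa where "sa = sin (delta n k d)"
  have ca: "ca = c/d" unfolding ca_def del using q by (simp add: cos_arccos)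
  have sa: "sa > 0" unfolding sa_def del 
  proof -
    have "(c/d)^2 < 1" using q by (simp add: power_less_one_iff)
    then show "sin (arccos (c/d)) > 0" using q by (simp add: sin_arccos)
  qed
  have one: "ca^2 + sa^2 = 1" unfolding ca_def sa_def by simp
  have dca: "d * ca = c" using ca dc cpos by simp
  have t1: "tangent_to_circle {z. Re z * ca + Im z * sa = d * ca} c"
    using tangent_aux[OF one cpos] dca by simp
  have t2: "tangent_to_circle {z. Re z * ca - Im z * sa = d * ca} c"
    using tangent_aux[of ca "-sa" c] one cpos dca by simp
  have sub: "cball 0 c \<subseteq> (Dtilde n k d \<inter> cball 0 c) \<union> (Etilde n k d \<inter> Rset n k d d \<inter> X)"
  proof
    fix z :: complex assume z: "z \<in> cball 0 c"
    have zz: "Re z ^2 + Im z^2 \<le> c^2" 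
    proof -
      have "cmod z \<le> c" using z by simp
      then have "(cmod z)^2 \<le> c^2" by (intro power_mono) auto
      then show ?thesis by (simp add: cmod_power2)
    qed
    have R: "z \<in> Rset n k d d"
    proof -
      have "Re z \<le> c" using z complex_Re_le_cmod[of z] by simp
      have a1: "Re z * ca + Im z * sa \<le> c" by (rule cs_aux[OF one zz cpos])
      have a2: "Re z * ca + (- Im z) * sa \<le> c" by (rule cs_aux[OF one _ cpos]) (use zz in simp)
      have "(Re z - d) * (ca / sa) \<le> Im z"
        using a2 dca sa by (simp add: field_simps)
      moreover have "Im z \<le> (d - Re z) * (ca/sa)"
        using a1 dca sa by (simp add: field_simps)
      ultimately show ?thesis unfolding Rset_def cot_def ca_def sa_def
        using \<open>Re z \<le> c\<close> dc by auto
    qed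
    have Xz: "z \<in> X"
    proof (cases "k \<le> m")
      case True then show ?thesis unfolding X_def by simp
    next
      case False
      have "cos (phi n k) \<le> cos (psi n k m)"
      proof (rule cos_monotone_0_pi_le)
        show "0 \<le> psi n k m" using False unfolding psi_def by simp
        show "psi n k m \<le> phi n k" using assms unfolding psi_def phi_def by (simp add: divide_right_mono)
        show "phi n k \<le> pi" using phlt pi_gt_zero by linarith
      qed
      then show ?thesis using False z unfolding X_def c_def by auto
    qed
    show "z \<in> (Dtilde n k d \<inter> cball 0 c) \<union> (Etilde n k d \<inter> Rset n k d d \<inter> X)"
      using z R Xz unfolding Dtilde_def Etilde_def by auto
  qed
  have eq: "(Dtilde n k d \<inter> cball 0 c) \<union> (Etilde n k d \<inter> Rset n k d d \<inter> X)
       = cball 0 c \<union> (Etilde n k d \<inter> Rset n k d d \<inter> X)" using sub by blast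
  show ?thesis unfolding Let_def d_def[symmetric] c_def[symmetric] X_def[symmetric]
    ca_def[symmetric] sa_def[symmetric]
  proof (intro conjI)
    show "Dtilde n k d \<inter> cball 0 c \<union> Etilde n k d \<inter> Rset n k d d \<inter> X = cball 0 c \<union> Etilde n k d \<inter> Rset n k d d \<inter> X" by (rule eq)
    show "tangent_to_circle {z. Re z * ca + Im z * sa = d * ca} c" by (rule t1)
    show "tangent_to_circle {z. Re z * ca - Im z * sa = d * ca} c" by (rule t2)
  qed
qed

end
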